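(* Let $f_1,\dots,f_M:\mathbb{R}\to(0,1)$ be continuous, strictly increasing cumulative distribution functions and let $w_1\ge\dots\ge w_M> 0$ with $\sum_{i=1}^M w_i=1$; set $F(x)=\sum_{i=1}^M w_i f_i(x)$. For $\epsilon\in(0,1)$ let $k$ be the smallest integer with $\sum_{i=1}^k w_i\ge 1-\epsilon$, let $c:=\sum_{i=1}^k w_i$ and $F_k(x):=\frac{1}{c}\sum_{i=1}^k w_i f_i(x)$. Let $p\in(0,1)$ with $p-2\epsilon\in(0,1)$ and $p+2\epsilon\in(0,1)$. Then \[F^{-1}(p-2\epsilon)\le F_k^{-1}(p)\le F^{-1}(p+2\epsilon).\]
   Context: For a continuous strictly increasing cdf $G$ and $q\in(0,1)$, $G^{-1}(q)$ denotes the unique $x$ with $G(x)=q$ (the $q$-quantile). *)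

theory Defs
  imports "HOL-Analysis.Analysis"
begin

definition cts_strict_cdf :: "(real \<Rightarrow> real) \<Rightarrow> bool" where
  "cts_strict_cdf G \<longleftrightarrow> continuous_on UNIV G \<and> strict_mono G \<and>
     (\<forall>x. 0 < G x \<and> G x < 1) \<and>
     (G \<longlongrightarrow> 0) at_bot \<and> (G \<longlongrightarrow> 1) at_top"

definition quantile :: "(real \<Rightarrow> real) \<Rightarrow> real \<Rightarrow> real" where
  "quantile G q = (THE x. G x = q)"

end

theory Submission
  imports Defs
begin

lemma quantile_eq: "strict_mono G \<Longrightarrow> G x = q \<Longrightarrow> quantile G q = x"
  unfolding quantile_def
  apply (rule the_equality, assumption)
  using strict_mono_eq by metis

lemma mix_props:
  fixes f :: "nat \<Rightarrow> real \<Rightarrow> real" and w :: "nat \<Rightarrow> real"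
  assumes n: "1 \<le> n" and cdf: "\<And>i. i \<in> {1..n} \<Longrightarrow> cts_strict_cdf (f i)"
    and wp: "\<And>i. i \<in> {1..n} \<Longrightarrow> 0 < w i"
  defines "C \<equiv> (\<Sum>i=1..n. w i)"
  defines "G \<equiv> (\<lambda>x. (1 / C) * (\<Sum>i=1..n. w i * f i x))"
  shows "strict_mono G" "\<And>q. 0 < q \<Longrightarrow> q < 1 \<Longrightarrow> \<exists>x. G x = q"
proof -
  have Cpos: "C > 0" unfolding C_def using n wp by (intro sum_pos) auto
  have ne: "{1..n} \<noteq> {}" using n by auto
  have fc: "\<And>i. i \<in> {1..n} \<Longrightarrow> continuous_on UNIV (f i)" 
    and fb: "\<And>i. i \<in> {1..n} \<Longrightarrow> (f i \<longlongrightarrow> 0) at_bot"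
    and ft: "\<And>i. i \<in> {1..n} \<Longrightarrow> (f i \<longlongrightarrow> 1) at_top"
    and fm: "\<And>i. i \<in> {1..n} \<Longrightarrow> strict_mono (f i)"
    using cdf unfolding cts_strict_cdf_def by blast+
  show sm: "strict_mono G"
  proof (rule strict_monoI)
    fix x y :: real assume "x < y"
    have "(\<Sum>i=1..n. w i * f i x) < (\<Sum>i=1..n. w i * f i y)"
    proof (rule sum_strict_mono[OF _ ne])
      fix i assume i: "i \<in> {1..n}"
      have "f i x < f i y" using fm[OF i] \<open>x<y\<close> by (simp add: strict_mono_less)
      thus "w i * f i x < w i * f i y" using wp[OF i] by simp
    qed simp
    then show "G x < G y" unfolding G_def using Cpos by (simp add: divide_strict_right_mono)
  qed
  have cont: "continuous_on UNIV G" unfolding G_def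
    by (intro continuous_on_mult continuous_on_const continuous_on_sum fc)
  have "(G \<longlongrightarrow> (1/C) * (\<Sum>i=1..n. w i * 0)) at_bot" unfolding G_def
    by (intro tendsto_mult tendsto_const tendsto_sum fb)
  hence lb: "(G \<longlongrightarrow> 0) at_bot" by simp
  have "(G \<longlongrightarrow> (1/C) * (\<Sum>i=1..n. w i * 1)) at_top" unfolding G_def
    by (intro tendsto_mult tendsto_const tendsto_sum ft)
  hence ub: "(G \<longlongrightarrow> 1) at_top" using Cpos by (simp add: C_def)
  fix q :: real assume q: "0 < q" "q < 1"
  have "eventually (\<lambda>x. G x < q) at_bot" using order_tendstoD(2)[OF lb q(1)] .
  then obtain a where a: "G a < q" unfolding eventually_at_bot_linorder by blast
  have "eventually (\<lambda>x. G x > q) at_top" using order_tendstoD(1)[OF ub q(2)] .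
  then obtain b where b: "G b > q" unfolding eventually_at_top_linorder by blast
  have "a \<le> b"
  proof (rule ccontr)
    assume "\<not> a \<le> b" hence "G b < G a" using sm by (simp add: strict_mono_less)
    with a b show False by simp
  qed
  have "continuous_on {a..b} G" using cont continuous_on_subset by blast
  from IVT'[of G a q b, OF _ _ \<open>a \<le> b\<close> this] a b show "\<exists>x. G x = q" by force
qed

theorem proposition1:
  fixes M :: nat and f :: "nat \<Rightarrow> real \<Rightarrow> real" and w :: "nat \<Rightarrow> real"
    and \<epsilon> p :: real
  assumes cdf: "\<And>i. i \<in> {1..M} \<Longrightarrow> cts_strict_cdf (f i)"
    and w_mono: "\<And>i j. 1 \<le> i \<Longrightarrow> i \<le> j \<Longrightarrow> j \<le> M \<Longrightarrow> w j \<le> w i"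
    and w_pos: "\<And>i. i \<in> {1..M} \<Longrightarrow> 0 < w i"
    and w_sum: "(\<Sum>i=1..M. w i) = 1"
    and eps: "0 < \<epsilon>" "\<epsilon> < 1"
    and p: "0 < p" "p < 1"
    and pm: "0 < p - 2*\<epsilon>" "p - 2*\<epsilon> < 1"
    and pp: "0 < p + 2*\<epsilon>" "p + 2*\<epsilon> < 1"
  defines "F \<equiv> (\<lambda>x. \<Sum>i=1..M. w i * f i x)"
    and "k \<equiv> (LEAST k::nat. (\<Sum>i=1..k. w i) \<ge> 1 - \<epsilon>)"
  defines "c \<equiv> (\<Sum>i=1..k. w i)"
  defines "F\<^sub>k \<equiv> (\<lambda>x. (1 / c) * (\<Sum>i=1..k. w i * f i x))"
  shows "quantile F (p - 2*\<epsilon>) \<le> quantile F\<^sub>k p \<and> quantile F\<^sub>k p \<le> quantile F (p + 2*\<epsilon>)"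
proof -
  have M1: "1 \<le> M" using w_sum by (cases M) auto
  have kex: "(\<Sum>i=1..M. w i) \<ge> 1 - \<epsilon>" using w_sum eps by simp
  have kM: "k \<le> M" unfolding k_def using kex by (rule Least_le)
  have kP: "(\<Sum>i=1..k. w i) \<ge> 1 - \<epsilon>" unfolding k_def using kex by (rule LeastI)
  have k1: "1 \<le> k"
  proof (rule ccontr)
    assume "\<not> 1 \<le> k" hence "k = 0" by simp
    with kP eps show False by simp
  qed
  have c_ge: "c \<ge> 1 - \<epsilon>" using kP c_def by simp
  have split: "(\<Sum>i=1..M. g i) = (\<Sum>i=1..k. g i) + (\<Sum>i=k+1..M. g i)" for g :: "nat \<Rightarrow> real"
    using sum.ub_add_nat[of 1 k g "M - k"] kM by simp
  have wt: "0 \<le> (\<Sum>i=k+1..M. w i)" using w_pos kM by (intro sum_nonneg) (auto intro: less_imp_le)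
  have tail: "(\<Sum>i=k+1..M. w i) = 1 - c" using split[of w] w_sum c_def by simp
  have c_le: "c \<le> 1" using tail wt by simp
  have cpos: "c > 0" using c_ge eps by simp
  have cdfk: "\<And>i. i \<in> {1..k} \<Longrightarrow> cts_strict_cdf (f i)" using cdf kM by auto
  have wk: "\<And>i. i \<in> {1..k} \<Longrightarrow> 0 < w i" using w_pos kM by auto
  have Gk: "strict_mono F\<^sub>k" "\<And>q. 0 < q \<Longrightarrow> q < 1 \<Longrightarrow> \<exists>x. F\<^sub>k x = q"
    using mix_props[of k f w, OF k1 cdfk wk] unfolding F\<^sub>k_def c_def by blast+
  have GF: "strict_mono F" "\<And>q. 0 < q \<Longrightarrow> q < 1 \<Longrightarrow> \<exists>x. F x = q"
    using mix_props[of M f w, OF M1 cdf w_pos] unfolding F_def w_sum by simp_all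
  obtain x0 where x0: "F\<^sub>k x0 = p" using Gk(2)[OF p] by blast
  obtain y1 where y1: "F y1 = p - 2*\<epsilon>" using GF(2)[OF pm] by blast
  obtain y2 where y2: "F y2 = p + 2*\<epsilon>" using GF(2)[OF pp] by blast
  have qx: "quantile F\<^sub>k p = x0" by (rule quantile_eq[OF Gk(1) x0])
  have q1: "quantile F (p - 2*\<epsilon>) = y1" by (rule quantile_eq[OF GF(1) y1])
  have q2: "quantile F (p + 2*\<epsilon>) = y2" by (rule quantile_eq[OF GF(1) y2])
  have head: "(\<Sum>i=1..k. w i * f i x0) = c * p" using x0 cpos unfolding F\<^sub>k_def by (simp add: field_simps)
  have Fx: "F x0 = c * p + (\<Sum>i=k+1..M. w i * f i x0)" unfolding F_def split head ..
  have r0: "0 \<le> (\<Sum>i=k+1..M. w i * f i x0)"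
    using w_pos cdf kM unfolding cts_strict_cdf_def
    by (intro sum_nonneg) (auto intro!: mult_nonneg_nonneg less_imp_le)
  have r1: "(\<Sum>i=k+1..M. w i * f i x0) \<le> (\<Sum>i=k+1..M. w i)"
  proof (rule sum_mono)
    fix i assume i: "i \<in> {k+1..M}"
    hence "i \<in> {1..M}" using k1 by auto
    hence "0 < w i" "f i x0 < 1" using w_pos cdf unfolding cts_strict_cdf_def by auto
    thus "w i * f i x0 \<le> w i" by (simp add: mult_left_le)
  qed
  have lo: "F x0 > p - 2*\<epsilon>"
  proof -
    have "c * p \<ge> (1 - \<epsilon>) * p" using c_ge p by (simp add: mult_right_mono)
    moreover have "\<epsilon> * p \<le> \<epsilon>" using eps p by (simp add: mult_left_le)
    ultimately have "c * p \<ge> p - \<epsilon>" by (simp add: algebra_simps)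
    thus ?thesis using Fx r0 eps by linarith
  qed
  have hi: "F x0 < p + 2*\<epsilon>"
  proof -
    have "(1 - c) * (1 - p) \<le> 1 - c" using c_le p by (simp add: mult_left_le)
    hence "c * p + (1 - c) \<le> p + \<epsilon>" using c_ge by (simp add: algebra_simps)
    thus ?thesis using Fx r1 tail eps by linarith
  qed
  have "y1 \<le> x0"
  proof (rule ccontr)
    assume "\<not> y1 \<le> x0" hence "F x0 < F y1" using GF(1) by (simp add: strict_mono_less)
    with lo y1 show False by simp
  qed
  moreover have "x0 \<le> y2"
  proof (rule ccontr)
    assume "\<not> x0 \<le> y2" hence "F y2 < F x0" using GF(1) by (simp add: strict_mono_less)
    with hi y2 show False by simp
  qed
  ultimately show ?thesis using qx q1 q2 by simp
qed

end
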